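(* Let $n\ge 0$, let $\lambda,\mu$ be decompositions of $n+1$, and for $1\le j\le n$ let $\phi(x_j)=I_{n+1}+E_{j+1,j}$ and $\phi(y_j)=I_{n+1}+E_{j,j+1}$ in $\mathrm{GL}_{n+1}(\mathbb{F}_2)$. Then the image of the homomorphism $\phi_{\lambda,\mu}\colon\langle A_{2,n}(S_{\lambda|\mu})\rangle\to\mathrm{GL}_{n+1}(\mathbb{F}_2)$ sending each generator $z\in S_{\lambda|\mu}$ to $\phi(z)$ (equivalently, the subgroup of $\mathrm{GL}_{n+1}(\mathbb{F}_2)$ generated by $\{\phi(z): z\in S_{\lambda|\mu}\}$) is $P_{\lambda|\mu}$.
   Context: $E_{i,j}$ is the matrix unit with $1$ in position $(i,j)$. A decomposition of $N$ is a finite sequence of positive integers $\lambda=(\lambda_1,\dots,\lambda_l)$ with sum $N$; $P_\lambda\le\mathrm{GL}_N(\mathbb{F}_2)$ is the group of invertible block upper triangular matrices with diagonal blocks of sizes $\lambda_1,\dots,\lambda_l$ in this order; $P_\mu^t$ is the group of transposes of elements of $P_\mu$; $P_{\lambda|\mu}=P_\lambda\cap P_\mu^t$. The stopover set is $\overline{s}(\lambda)=\{\lambda_1,\lambda_1+\lambda_2,\dots,\lambda_1+\dots+\lambda_{l-1}\}$, and $S_{\lambda|\mu}=\{x_i : 1\le i\le n,\ i\notin\overline{s}(\lambda)\}\cup\{y_j: 1\le j\le n,\ j\notin\overline{s}(\mu)\}$. The group $\langle A_{2,n}\rangle$ has generators $X=\{x_1,\dots,x_n,y_1,\dots,y_n\}$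 and relations: $z^2=e$ ($z\in X$); $(x_ix_{i+1})^4=(y_iy_{i+1})^4=e$ ($1\le i\le n-1$); $(x_iy_i)^3=e$ ($1\le i\le n$); $(zt)^2=e$ for every other pair of distinct $z,t\in X$; $(x_ix_{i+1}y_i)^3=(x_ix_{i+1}y_{i+1})^3=(x_iy_iy_{i+1})^3=(x_{i+1}y_iy_{i+1})^3=e$ ($1\le i\le n-1$); $(x_ix_{i+1}x_{i+2})^4=(y_iy_{i+1}y_{i+2})^4=e$ ($1\le i\le n-2$). For $S\subseteq X$, $\langle A_{2,n}(S)\rangle$ is the group generated by $S$ subject to exactly those relations above involving only elements of $S$. *)

theory Defs
  imports "Jordan_Normal_Form.Matrix" "HOL-Library.Z2" "HOL-Algebra.Generated_Groups"
begin

text \<open>Matrices over F_2 are JNF matrices with entries in the field type bit.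
  Paper indices are 1-based; JNF indices are 0-based, so paper entry (i,j) is A $$ (i-1, j-1).\<close>

definition GL :: "nat \<Rightarrow> bit mat set" where
  "GL N = {A \<in> carrier_mat N N. invertible_mat A}"

definition GL_group :: "nat \<Rightarrow> bit mat monoid" where
  "GL_group N = \<lparr>carrier = GL N, mult = (*), one = 1\<^sub>m N\<rparr>"

definition E_unit :: "nat \<Rightarrow> nat \<Rightarrow> nat \<Rightarrow> bit mat" where
  "E_unit N i j = mat N N (\<lambda>(a, b). if a = i - 1 \<and> b = j - 1 then 1 else 0)"

definition decomposition :: "nat \<Rightarrow> nat list \<Rightarrow> bool" where
  "decomposition N lam \<longleftrightarrow> (\<forall>k \<in> set lam. 0 < k) \<and> sum_list lam = N"

definition stopover :: "nat list \<Rightarrow> nat set" where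
  "stopover lam = {sum_list (take k lam) | k. 1 \<le> k \<and> k \<le> length lam - 1}"

definition block_of :: "nat list \<Rightarrow> nat \<Rightarrow> nat" where
  "block_of lam i = card {s \<in> stopover lam. s < i}"

text \<open>P_lam: invertible block upper triangular matrices with diagonal blocks of sizes
  lam_1, ..., lam_l in this order: entry (i,j) vanishes when row i lies in a later block than column j.\<close>
definition P_par :: "nat \<Rightarrow> nat list \<Rightarrow> bit mat set" where
  "P_par N lam = {A \<in> GL N. \<forall>i \<in> {1..N}. \<forall>j \<in> {1..N}.
      block_of lam j < block_of lam i \<longrightarrow> A $$ (i - 1, j - 1) = 0}"

definition P_par_t :: "nat \<Rightarrow> nat list \<Rightarrow> bit mat set" where
  "P_par_t N mu = transpose_mat ` P_par N mu"

definition P_bar :: "nat \<Rightarrow> nat list \<Rightarrow> nat list \<Rightarrow> bit mat set" where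
  "P_bar N lam mu = P_par N lam \<inter> P_par_t N mu"

datatype gen = X nat | Y nat

definition S_gens :: "nat \<Rightarrow> nat list \<Rightarrow> nat list \<Rightarrow> gen set" where
  "S_gens n lam mu = {X i | i. 1 \<le> i \<and> i \<le> n \<and> i \<notin> stopover lam}
                   \<union> {Y j | j. 1 \<le> j \<and> j \<le> n \<and> j \<notin> stopover mu}"

fun phi :: "nat \<Rightarrow> gen \<Rightarrow> bit mat" where
  "phi n (X j) = 1\<^sub>m (n + 1) + E_unit (n + 1) (j + 1) j"
| "phi n (Y j) = 1\<^sub>m (n + 1) + E_unit (n + 1) j (j + 1)"

end

theory Submission
  imports Defs
begin

lemma bit_add_self[simp]: "(x::bit) + x = 0"
  by (cases x) simp_all

definition Tm :: "nat \<Rightarrow> nat \<Rightarrow> nat \<Rightarrow> bit mat" where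
  "Tm N i j = 1\<^sub>m N + E_unit N (i+1) (j+1)"

lemma Tm_carrier[simp]: "Tm N i j \<in> carrier_mat N N"
  and Tm_dims[simp]: "dim_row (Tm N i j) = N" "dim_col (Tm N i j) = N"
  by (auto simp: Tm_def E_unit_def)

lemma Tm_index: "a < N \<Longrightarrow> b < N \<Longrightarrow>
   Tm N i j $$ (a,b) = (if a = b then 1 else 0) + (if a = i \<and> b = j then 1 else 0)"
  by (simp add: Tm_def E_unit_def)

lemma sum_delta_bit1: "a < (N::nat) \<Longrightarrow> (\<Sum>l\<in>{0..<N}. (if a = l then 1 else 0) * (f l :: bit)) = f a"
proof -
  have "(\<Sum>l\<in>{0..<N}. (if a = l then 1 else 0) * (f l :: bit)) = (\<Sum>l\<in>{0..<N}. if a = l then f l else 0)"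
    by (rule sum.cong) auto
  also assume "a < N"
  then have "(\<Sum>l\<in>{0..<N}. if a = l then f l else 0) = f a" by (subst sum.delta') auto
  finally show ?thesis .
qed

lemma sum_delta_bit2: "j < (N::nat) \<Longrightarrow> (\<Sum>l\<in>{0..<N}. (if P \<and> l = j then 1 else 0) * (f l :: bit)) = (if P then f j else 0)"
proof -
  have "(\<Sum>l\<in>{0..<N}. (if P \<and> l = j then 1 else 0) * (f l :: bit)) = (\<Sum>l\<in>{0..<N}. if l = j then (if P then f l else 0) else 0)"
    by (rule sum.cong) auto
  also assume "j < N"
  then have "(\<Sum>l\<in>{0..<N}. if l = j then (if P then f l else 0) else 0) = (if P then f j else 0)" by (subst sum.delta) auto
  finally show ?thesis .
qed

lemma Tm_mult_left:
  assumes "A \<in> carrier_mat N N" "i < N" "j < N" "a < N" "b < N"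
  shows "(Tm N i j * A) $$ (a,b) = A $$ (a,b) + (if a = i then A $$ (j,b) else 0)"
proof -
  have "(Tm N i j * A) $$ (a,b) = (\<Sum>l\<in>{0..<N}. Tm N i j $$ (a,l) * A $$ (l,b))"
    using assms by (simp add: scalar_prod_def)
  also have "\<dots> = (\<Sum>l\<in>{0..<N}. (if a = l then 1 else 0) * A $$ (l,b) + (if a = i \<and> l = j then 1 else 0) * A $$ (l,b))"
    by (rule sum.cong) (simp_all only: Tm_index assms distrib_right atLeastLessThan_iff)
  also have "\<dots> = (\<Sum>l\<in>{0..<N}. (if a = l then 1 else 0) * A $$ (l,b)) + (\<Sum>l\<in>{0..<N}. (if a = i \<and> l = j then 1 else 0) * A $$ (l,b))"
    by (rule sum.distrib)
  also have "\<dots> = A $$ (a,b) + (if a = i then A $$ (j,b) else 0)"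
    using assms by (simp only: sum_delta_bit1 sum_delta_bit2)
  finally show ?thesis .
qed

lemma Tm_mult_right:
  assumes "A \<in> carrier_mat N N" "i < N" "j < N" "a < N" "b < N"
  shows "(A * Tm N i j) $$ (a,b) = A $$ (a,b) + (if b = j then A $$ (a,i) else 0)"
proof -
  have "(A * Tm N i j) $$ (a,b) = (\<Sum>l\<in>{0..<N}. A $$ (a,l) * Tm N i j $$ (l,b))"
    using assms by (simp add: scalar_prod_def)
  also have "\<dots> = (\<Sum>l\<in>{0..<N}. (if b = l then 1 else 0) * A $$ (a,l) + (if b = j \<and> l = i then 1 else 0) * A $$ (a,l))"
    by (rule sum.cong) (auto simp only: Tm_index assms distrib_left atLeastLessThan_iff mult.commute eq_commute conj_commute)
  also have "\<dots> = (\<Sum>l\<in>{0..<N}. (if b = l then 1 else 0) * A $$ (a,l)) + (\<Sum>l\<in>{0..<N}. (if b = j \<and> l = i then 1 else 0) * A $$ (a,l))"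
    by (rule sum.distrib)
  also have "\<dots> = A $$ (a,b) + (if b = j then A $$ (a,i) else 0)"
    using assms by (simp only: sum_delta_bit1 sum_delta_bit2)
  finally show ?thesis .
qed

lemma Tm_sq: assumes "i \<noteq> j" "i < N" "j < N" shows "Tm N i j * Tm N i j = 1\<^sub>m N"
  using assms by (intro eq_matI) (auto simp del: index_mult_mat(1) simp add: Tm_mult_left Tm_index)

lemma Tm_comm:
  assumes "i \<noteq> k" "k \<noteq> j" "i \<noteq> j" "i < N" "j < N" "k < N"
  shows "Tm N i j = Tm N i k * Tm N k j * Tm N i k * Tm N k j"
proof -
  have c1: "Tm N i k * Tm N k j \<in> carrier_mat N N" by (meson Tm_carrier mult_carrier_mat)
  have c2: "Tm N i k * Tm N k j * Tm N i k \<in> carrier_mat N N" by (meson c1 Tm_carrier mult_carrier_mat)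
  show ?thesis
    using assms by (intro eq_matI) (auto simp del: index_mult_mat(1) simp add: Tm_mult_left Tm_mult_right Tm_index c1 c2)
qed


lemma stopover_finite[simp]: "finite (stopover lam)"
proof -
  have "stopover lam \<subseteq> (\<lambda>k. sum_list (take k lam)) ` {..length lam}"
    by (auto simp: stopover_def)
  then show ?thesis by (rule finite_subset) simp
qed

lemma block_of_Suc: "block_of lam (Suc i) = block_of lam i + (if i \<in> stopover lam then 1 else 0)"
proof -
  have e: "{s \<in> stopover lam. s < Suc i} = {s \<in> stopover lam. s < i} \<union> (if i \<in> stopover lam then {i} else {})"
    by (auto simp: less_Suc_eq)
  show ?thesis unfolding block_of_def e
    by (subst card_Un_disjoint) auto
qed

lemma block_of_mono: "i \<le> j \<Longrightarrow> block_of lam i \<le> block_of lam j"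
  unfolding block_of_def by (rule card_mono) auto

lemma block_of_eq_Suc: "block_of lam (Suc i) = block_of lam i \<longleftrightarrow> i \<notin> stopover lam"
  by (simp add: block_of_Suc)

definition pat :: "nat list \<Rightarrow> nat list \<Rightarrow> nat \<Rightarrow> nat \<Rightarrow> bool" where
  "pat lam mu a b \<longleftrightarrow> \<not> block_of lam (b+1) < block_of lam (a+1) \<and> \<not> block_of mu (a+1) < block_of mu (b+1)"

lemma pat_refl[simp]: "pat lam mu a a" by (simp add: pat_def)

lemma pat_trans: "pat lam mu a b \<Longrightarrow> pat lam mu b c \<Longrightarrow> pat lam mu a c"
  by (auto simp: pat_def)

definition Qs :: "nat \<Rightarrow> nat list \<Rightarrow> nat list \<Rightarrow> bit mat set" where
  "Qs N lam mu = {A \<in> carrier_mat N N. invertible_mat A \<and> (\<forall>a<N. \<forall>b<N. A $$ (a,b) \<noteq> 0 \<longrightarrow> pat lam mu a b)}"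

lemma invertible_iff:
  assumes "(A :: bit mat) \<in> carrier_mat N N"
  shows "invertible_mat A \<longleftrightarrow> (\<exists>B\<in>carrier_mat N N. A * B = 1\<^sub>m N \<and> B * A = 1\<^sub>m N)"
proof
  assume "invertible_mat A"
  then obtain B where AB: "A * B = 1\<^sub>m N" and BA: "B * A = 1\<^sub>m (dim_row B)"
    using assms unfolding invertible_mat_def inverts_mat_def by auto
  have "dim_col B = N" using arg_cong[OF AB, of dim_col] by simp
  moreover have "dim_row B = N" using arg_cong[OF BA, of dim_col] assms by simp
  ultimately show "\<exists>B\<in>carrier_mat N N. A * B = 1\<^sub>m N \<and> B * A = 1\<^sub>m N"
    using AB BA by (intro bexI[of _ B]) auto
next
  assume "\<exists>B\<in>carrier_mat N N. A * B = 1\<^sub>m N \<and> B * A = 1\<^sub>m N"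
  then show "invertible_mat A" using assms
    unfolding invertible_mat_def inverts_mat_def square_mat.simps by auto
qed

lemma mult_cancel_aux:
  assumes "(B :: bit mat) \<in> carrier_mat N N" "B' \<in> carrier_mat N N" "C \<in> carrier_mat N M" "B * B' = 1\<^sub>m N"
  shows "B * (B' * C) = C"
proof -
  have "B * (B' * C) = (B * B') * C" by (rule assoc_mult_mat[symmetric]) (use assms in auto)
  also have "\<dots> = C" using assms by (simp only: left_mult_one_mat)
  finally show ?thesis .
qed

lemma invertible_mult:
  assumes "(A :: bit mat) \<in> carrier_mat N N" "B \<in> carrier_mat N N" "invertible_mat A" "invertible_mat B"
  shows "invertible_mat (A * B)"
proof -
  obtain A' where A': "A' \<in> carrier_mat N N" "A * A' = 1\<^sub>m N" "A' * A = 1\<^sub>m N"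
    using assms invertible_iff by blast
  obtain B' where B': "B' \<in> carrier_mat N N" "B * B' = 1\<^sub>m N" "B' * B = 1\<^sub>m N"
    using assms invertible_iff by blast
  have "A * B * (B' * A') = A * (B * (B' * A'))"
    by (rule assoc_mult_mat) (use assms A' B' in auto)
  also have "B * (B' * A') = A'" using assms A' B' by (intro mult_cancel_aux[of B N B' A' N])
  finally have 1: "A * B * (B' * A') = 1\<^sub>m N" using A' by simp
  have "B' * A' * (A * B) = B' * (A' * (A * B))"
    by (rule assoc_mult_mat) (use assms A' B' in auto)
  also have "A' * (A * B) = B" using assms A' B' by (intro mult_cancel_aux[of A' N A B N])
  finally have 2: "B' * A' * (A * B) = 1\<^sub>m N" using B' by simp
  have cAB: "A * B \<in> carrier_mat N N" using assms by simp
  have cBA: "B' * A' \<in> carrier_mat N N" using A' B' by simp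
  show ?thesis using invertible_iff[OF cAB] 1 2 cBA by blast
qed

lemma invertible_transpose:
  assumes "(A :: bit mat) \<in> carrier_mat N N" "invertible_mat A"
  shows "invertible_mat (transpose_mat A)"
proof -
  obtain A' where A': "A' \<in> carrier_mat N N" "A * A' = 1\<^sub>m N" "A' * A = 1\<^sub>m N"
    using assms invertible_iff by blast
  have "transpose_mat A * transpose_mat A' = transpose_mat (A' * A)"
    by (rule transpose_mult[symmetric]) (use A' assms in auto)
  also have "\<dots> = 1\<^sub>m N" using A' by simp
  finally have 1: "transpose_mat A * transpose_mat A' = 1\<^sub>m N" .
  have "transpose_mat A' * transpose_mat A = transpose_mat (A * A')"
    by (rule transpose_mult[symmetric]) (use A' assms in auto)
  also have "\<dots> = 1\<^sub>m N" using A' by simp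
  finally have 2: "transpose_mat A' * transpose_mat A = 1\<^sub>m N" .
  show ?thesis using A' assms 1 2
    by (subst invertible_iff[of _ N]) (auto intro!: bexI[of _ "transpose_mat A'"])
qed

lemma Tm_invertible: "i \<noteq> j \<Longrightarrow> i < N \<Longrightarrow> j < N \<Longrightarrow> invertible_mat (Tm N i j)"
  by (subst invertible_iff[of _ N]) (auto simp: Tm_sq intro!: bexI[of _ "Tm N i j"])

lemma one_invertible: "invertible_mat (1\<^sub>m N :: bit mat)"
  by (subst invertible_iff[of _ N]) auto

lemma mult_nonzero_ex:
  assumes "(A :: bit mat) \<in> carrier_mat N N" "B \<in> carrier_mat N N" "a < N" "c < N" "(A * B) $$ (a,c) \<noteq> 0"
  shows "\<exists>b<N. A $$ (a,b) \<noteq> 0 \<and> B $$ (b,c) \<noteq> 0"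
proof (rule ccontr)
  assume "\<not> ?thesis"
  then have "\<forall>b\<in>{0..<N}. A $$ (a,b) * B $$ (b,c) = 0" by auto
  then have "(\<Sum>b\<in>{0..<N}. A $$ (a,b) * B $$ (b,c)) = 0" by (intro sum.neutral) blast
  moreover have "(A * B) $$ (a,c) = (\<Sum>b\<in>{0..<N}. A $$ (a,b) * B $$ (b,c))"
    using assms by (simp add: scalar_prod_def)
  ultimately show False using assms by simp
qed

lemma Qs_mult:
  assumes "A \<in> Qs N lam mu" "B \<in> Qs N lam mu"
  shows "A * B \<in> Qs N lam mu"
proof -
  have c: "A \<in> carrier_mat N N" "B \<in> carrier_mat N N" using assms by (auto simp: Qs_def)
  have "invertible_mat (A * B)" using assms c by (intro invertible_mult[of _ N]) (auto simp: Qs_def)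
  moreover have "pat lam mu a d" if h: "a < N" "d < N" "(A * B) $$ (a,d) \<noteq> 0" for a d
  proof -
    obtain b where "b < N" "A $$ (a,b) \<noteq> 0" "B $$ (b,d) \<noteq> 0"
      using mult_nonzero_ex[OF c h] by blast
    then have "pat lam mu a b" "pat lam mu b d" using assms h unfolding Qs_def by blast+
    then show ?thesis by (rule pat_trans)
  qed
  ultimately show ?thesis using c by (auto simp: Qs_def)
qed

lemma Tm_Qs: "i \<noteq> j \<Longrightarrow> i < N \<Longrightarrow> j < N \<Longrightarrow> pat lam mu i j \<Longrightarrow> Tm N i j \<in> Qs N lam mu"
  by (auto simp: Qs_def Tm_invertible Tm_index split: if_splits)

lemma one_Qs: "1\<^sub>m N \<in> Qs N lam mu"
  by (auto simp: Qs_def one_invertible)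

lemma P_bar_Qs: "P_bar N lam mu = Qs N lam mu"
proof -
  have P1: "A \<in> P_par N lam \<longleftrightarrow> A \<in> carrier_mat N N \<and> invertible_mat A \<and>
      (\<forall>a<N. \<forall>b<N. block_of lam (b+1) < block_of lam (a+1) \<longrightarrow> A $$ (a,b) = 0)" for A lam
  proof -
    have "(\<forall>i \<in> {1..N}. \<forall>j \<in> {1..N}. block_of lam j < block_of lam i \<longrightarrow> A $$ (i - 1, j - 1) = 0)
       \<longleftrightarrow> (\<forall>a<N. \<forall>b<N. block_of lam (b+1) < block_of lam (a+1) \<longrightarrow> A $$ (a,b) = 0)"
    proof
      assume H: "\<forall>i \<in> {1..N}. \<forall>j \<in> {1..N}. block_of lam j < block_of lam i \<longrightarrow> A $$ (i - 1, j - 1) = 0"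
      show "\<forall>a<N. \<forall>b<N. block_of lam (b+1) < block_of lam (a+1) \<longrightarrow> A $$ (a,b) = 0"
      proof (intro allI impI)
        fix a b assume "a < N" "b < N" "block_of lam (b+1) < block_of lam (a+1)"
        then show "A $$ (a,b) = 0" using H[rule_format, of "a+1" "b+1"] by simp
      qed
    next
      assume H: "\<forall>a<N. \<forall>b<N. block_of lam (b+1) < block_of lam (a+1) \<longrightarrow> A $$ (a,b) = 0"
      show "\<forall>i \<in> {1..N}. \<forall>j \<in> {1..N}. block_of lam j < block_of lam i \<longrightarrow> A $$ (i - 1, j - 1) = 0"
      proof (intro ballI impI)
        fix i j assume "i \<in> {1..N}" "j \<in> {1..N}" "block_of lam j < block_of lam i"
        moreover obtain a b where "i = a + 1" "j = b + 1" using \<open>i \<in> {1..N}\<close> \<open>j \<in> {1..N}\<close>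
          by (metis Suc_eq_plus1 atLeastAtMost_iff not0_implies_Suc not_one_le_zero)
        ultimately show "A $$ (i - 1, j - 1) = 0" using H[rule_format, of a b] by simp
      qed
    qed
    then show ?thesis unfolding P_par_def GL_def by blast
  qed
  have P2: "A \<in> P_par_t N mu \<longleftrightarrow> A \<in> carrier_mat N N \<and> invertible_mat A \<and>
      (\<forall>a<N. \<forall>b<N. block_of mu (a+1) < block_of mu (b+1) \<longrightarrow> A $$ (a,b) = 0)" for A
  proof -
    have "A \<in> P_par_t N mu \<longleftrightarrow> transpose_mat A \<in> P_par N mu"
      unfolding P_par_t_def
      by (metis (no_types, lifting) image_iff transpose_transpose)
    also have "\<dots> \<longleftrightarrow> A \<in> carrier_mat N N \<and> invertible_mat A \<and>
      (\<forall>a<N. \<forall>b<N. block_of mu (a+1) < block_of mu (b+1) \<longrightarrow> A $$ (a,b) = 0)"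
      unfolding P1
    proof (intro iffI conjI)
      assume h: "transpose_mat A \<in> carrier_mat N N \<and> invertible_mat (transpose_mat A) \<and>
        (\<forall>a<N. \<forall>b<N. block_of mu (b + 1) < block_of mu (a + 1) \<longrightarrow> transpose_mat A $$ (a, b) = 0)"
      then show c: "A \<in> carrier_mat N N" by simp
      show "invertible_mat A" using h invertible_transpose[of "transpose_mat A" N] by simp
      show "\<forall>a<N. \<forall>b<N. block_of mu (a+1) < block_of mu (b+1) \<longrightarrow> A $$ (a,b) = 0"
      proof (intro allI impI)
        fix a b assume "a < N" "b < N" "block_of mu (a+1) < block_of mu (b+1)"
        then have "transpose_mat A $$ (b, a) = 0" using h by blast
        then show "A $$ (a,b) = 0" using c \<open>a < N\<close> \<open>b < N\<close> by simp
      qed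
    next
      assume h: "A \<in> carrier_mat N N \<and> invertible_mat A \<and>
        (\<forall>a<N. \<forall>b<N. block_of mu (a+1) < block_of mu (b+1) \<longrightarrow> A $$ (a,b) = 0)"
      then show "transpose_mat A \<in> carrier_mat N N" by simp
      show "invertible_mat (transpose_mat A)" using h invertible_transpose[of A N] by simp
      show "\<forall>a<N. \<forall>b<N. block_of mu (b + 1) < block_of mu (a + 1) \<longrightarrow> transpose_mat A $$ (a, b) = 0"
      proof (intro allI impI)
        fix a b assume "a < N" "b < N" "block_of mu (b+1) < block_of mu (a+1)"
        then have "A $$ (b, a) = 0" using h by blast
        then show "transpose_mat A $$ (a,b) = 0" using h[THEN conjunct1] \<open>a < N\<close> \<open>b < N\<close> by simp
      qed
    qed
    finally show ?thesis .
  qed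
  have "A \<in> P_bar N lam mu \<longleftrightarrow> A \<in> Qs N lam mu" for A
      unfolding P_bar_def Qs_def Int_iff P1 P2 mem_Collect_eq pat_def
      by blast
  then show ?thesis by blast
qed


definition Hg :: "nat \<Rightarrow> nat list \<Rightarrow> nat list \<Rightarrow> bit mat set" where
  "Hg n lam mu = generate (GL_group (n+1)) (phi n ` S_gens n lam mu)"

lemma Hg_mult: "A \<in> Hg n lam mu \<Longrightarrow> B \<in> Hg n lam mu \<Longrightarrow> A * B \<in> Hg n lam mu"
  unfolding Hg_def using generate.eng[of A "GL_group (n+1)" _ B] by (simp add: GL_group_def)

lemma Hg_one: "1\<^sub>m (n+1) \<in> Hg n lam mu"
  unfolding Hg_def using generate.one[of "GL_group (n+1)"] by (simp add: GL_group_def)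

lemma Hg_incl: "z \<in> S_gens n lam mu \<Longrightarrow> phi n z \<in> Hg n lam mu"
  unfolding Hg_def by (rule generate.incl) simp

lemma phi_Y: "phi n (Y (i+1)) = Tm (n+1) i (i+1)"
  by (simp add: Tm_def)

lemma phi_X: "phi n (X (i+1)) = Tm (n+1) (i+1) i"
  by (simp add: Tm_def)

lemma gen_up: "i + 1 \<le> n \<Longrightarrow> i + 1 \<notin> stopover mu \<Longrightarrow> Tm (n+1) i (i+1) \<in> Hg n lam mu"
  using Hg_incl[of "Y (i+1)" n lam mu] by (simp add: S_gens_def Tm_def)

lemma gen_low: "i + 1 \<le> n \<Longrightarrow> i + 1 \<notin> stopover lam \<Longrightarrow> Tm (n+1) (i+1) i \<in> Hg n lam mu"
  using Hg_incl[of "X (i+1)" n lam mu] by (simp add: S_gens_def Tm_def)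

lemma up_all: "i < j \<Longrightarrow> j \<le> n \<Longrightarrow> block_of mu (i+1) = block_of mu (j+1) \<Longrightarrow> Tm (n+1) i j \<in> Hg n lam mu"
proof (induction j)
  case 0 then show ?case by simp
next
  case (Suc j)
  have base: "Tm (n+1) j (j+1) \<in> Hg n lam mu" if "block_of mu (j+1) = block_of mu (j+2)"
    using that Suc.prems block_of_eq_Suc[of mu "j+1"] by (intro gen_up) auto
  show ?case
  proof (cases "i = j")
    case True then show ?thesis using base Suc.prems by simp
  next
    case False
    then have ij: "i < j" using Suc.prems by simp
    have "block_of mu (i+1) \<le> block_of mu (j+1)" "block_of mu (j+1) \<le> block_of mu (j+2)"
      using ij by (auto intro: block_of_mono)
    then have e1: "block_of mu (i+1) = block_of mu (j+1)" and e2: "block_of mu (j+1) = block_of mu (j+2)"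
      using Suc.prems by auto
    have "Tm (n+1) i j \<in> Hg n lam mu" using Suc.IH ij Suc.prems e1 by simp
    moreover have "Tm (n+1) j (j+1) \<in> Hg n lam mu" using base e2 by simp
    ultimately have "Tm (n+1) i j * Tm (n+1) j (j+1) * Tm (n+1) i j * Tm (n+1) j (j+1) \<in> Hg n lam mu"
      by (intro Hg_mult)
    moreover have "Tm (n+1) i (Suc j) = Tm (n+1) i j * Tm (n+1) j (j+1) * Tm (n+1) i j * Tm (n+1) j (j+1)"
      using Tm_comm[of i j "Suc j" "n+1"] ij Suc.prems by simp
    ultimately show ?thesis by simp
  qed
qed

lemma low_all: "j < i \<Longrightarrow> i \<le> n \<Longrightarrow> block_of lam (i+1) = block_of lam (j+1) \<Longrightarrow> Tm (n+1) i j \<in> Hg n lam mu"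
proof (induction i)
  case 0 then show ?case by simp
next
  case (Suc i)
  have base: "Tm (n+1) (i+1) i \<in> Hg n lam mu" if "block_of lam (i+1) = block_of lam (i+2)"
    using that Suc.prems block_of_eq_Suc[of lam "i+1"] by (intro gen_low) auto
  show ?case
  proof (cases "j = i")
    case True then show ?thesis using base Suc.prems by simp
  next
    case False
    then have ij: "j < i" using Suc.prems by simp
    have "block_of lam (j+1) \<le> block_of lam (i+1)" "block_of lam (i+1) \<le> block_of lam (i+2)"
      using ij by (auto intro: block_of_mono)
    then have e1: "block_of lam (i+1) = block_of lam (j+1)" and e2: "block_of lam (i+1) = block_of lam (i+2)"
      using Suc.prems by auto
    have "Tm (n+1) i j \<in> Hg n lam mu" using Suc.IH ij Suc.prems e1 by simp
    moreover have "Tm (n+1) (i+1) i \<in> Hg n lam mu" using base e2 by simp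
    ultimately have "Tm (n+1) (i+1) i * Tm (n+1) i j * Tm (n+1) (i+1) i * Tm (n+1) i j \<in> Hg n lam mu"
      by (intro Hg_mult)
    moreover have "Tm (n+1) (Suc i) j = Tm (n+1) (i+1) i * Tm (n+1) i j * Tm (n+1) (i+1) i * Tm (n+1) i j"
      using Tm_comm[of "Suc i" i j "n+1"] ij Suc.prems by simp
    ultimately show ?thesis by simp
  qed
qed

lemma pat_all: "a \<noteq> b \<Longrightarrow> a < n + 1 \<Longrightarrow> b < n + 1 \<Longrightarrow> pat lam mu a b \<Longrightarrow> Tm (n+1) a b \<in> Hg n lam mu"
proof (cases "a < b")
  case True
  assume h: "a < n + 1" "b < n + 1" "pat lam mu a b"
  have "block_of mu (a+1) \<le> block_of mu (b+1)" using True by (intro block_of_mono) simp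
  then have "block_of mu (a+1) = block_of mu (b+1)" using h unfolding pat_def by simp
  then show ?thesis using True h by (intro up_all) auto
next
  case False
  assume h: "a \<noteq> b" "a < n + 1" "b < n + 1" "pat lam mu a b"
  then have ba: "b < a" using False by simp
  have "block_of lam (b+1) \<le> block_of lam (a+1)" using ba by (intro block_of_mono) simp
  then have "block_of lam (a+1) = block_of lam (b+1)" using h unfolding pat_def by simp
  then show ?thesis using ba h by (intro low_all) auto
qed

lemma left_cancel:
  assumes "i \<noteq> j" "i < n+1" "j < n+1" "Tm (n+1) i j \<in> Hg n lam mu" "A \<in> carrier_mat (n+1) (n+1)"
    "Tm (n+1) i j * A \<in> Hg n lam mu"
  shows "A \<in> Hg n lam mu"
proof -
  have "Tm (n+1) i j * (Tm (n+1) i j * A) = A"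
    using assms by (intro mult_cancel_aux[of _ "n+1"]) (auto simp: Tm_sq)
  moreover have "Tm (n+1) i j * (Tm (n+1) i j * A) \<in> Hg n lam mu" using assms by (rule_tac Hg_mult) auto
  ultimately show ?thesis by metis
qed

lemma right_cancel:
  assumes "i \<noteq> j" "i < n+1" "j < n+1" "Tm (n+1) i j \<in> Hg n lam mu" "A \<in> carrier_mat (n+1) (n+1)"
    "A * Tm (n+1) i j \<in> Hg n lam mu"
  shows "A \<in> Hg n lam mu"
proof -
  have "A * Tm (n+1) i j * Tm (n+1) i j = A * (Tm (n+1) i j * Tm (n+1) i j)"
    using assms by (intro assoc_mult_mat[of _ "n+1" "n+1" _ "n+1" _ "n+1"]) auto
  also have "\<dots> = A" using assms by (simp add: Tm_sq)
  finally have "A * Tm (n+1) i j * Tm (n+1) i j = A" .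
  moreover have "A * Tm (n+1) i j * Tm (n+1) i j \<in> Hg n lam mu" using assms by (rule_tac Hg_mult) auto
  ultimately show ?thesis by metis
qed

definition idout :: "nat \<Rightarrow> nat \<Rightarrow> bit mat \<Rightarrow> bool" where
  "idout N k A \<longleftrightarrow> (\<forall>a<N. \<forall>b<N. (k \<le> a \<or> k \<le> b) \<longrightarrow> A $$ (a,b) = (if a = b then 1 else 0))"

lemma Qs_carrier: "A \<in> Qs N lam mu \<Longrightarrow> A \<in> carrier_mat N N"
  by (simp add: Qs_def)

lemma Qs_pat: "A \<in> Qs N lam mu \<Longrightarrow> a < N \<Longrightarrow> b < N \<Longrightarrow> A $$ (a,b) \<noteq> 0 \<Longrightarrow> pat lam mu a b"
  by (simp add: Qs_def)


lemma col_nonzero: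
  assumes "(A :: bit mat) \<in> carrier_mat N N" "invertible_mat A" "j < N"
  shows "\<exists>r<N. A $$ (r,j) \<noteq> 0"
proof -
  obtain B where B: "B \<in> carrier_mat N N" "B * A = 1\<^sub>m N"
    using assms invertible_iff by blast
  have 1: "(B * A) $$ (j,j) = 1" using B(2) assms(3) by simp
  have "\<exists>b<N. B $$ (j,b) \<noteq> 0 \<and> A $$ (b,j) \<noteq> 0"
    by (rule mult_nonzero_ex[OF B(1) assms(1) assms(3) assms(3)]) (simp add: 1)
  then show ?thesis by blast
qed

lemma row_nonzero:
  assumes "(A :: bit mat) \<in> carrier_mat N N" "invertible_mat A" "i < N"
  shows "\<exists>c<N. A $$ (i,c) \<noteq> 0"
proof -
  obtain B where B: "B \<in> carrier_mat N N" "A * B = 1\<^sub>m N"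
    using assms invertible_iff by blast
  have 1: "(A * B) $$ (i,i) = 1" using B(2) assms(3) by simp
  have "\<exists>b<N. A $$ (i,b) \<noteq> 0 \<and> B $$ (b,i) \<noteq> 0"
    by (rule mult_nonzero_ex[OF assms(1) B(1) assms(3) assms(3)]) (simp add: 1)
  then show ?thesis by blast
qed

lemma col_clear:
  assumes m: "m < n + 1"
    and IH: "\<And>A'. A' \<in> Qs (n+1) lam mu \<Longrightarrow> idout (n+1) (Suc m) A' \<Longrightarrow> A' $$ (m,m) = 1 \<Longrightarrow>
               (\<forall>r<m. A' $$ (r,m) = 0) \<Longrightarrow> A' \<in> Hg n lam mu"
  shows "A \<in> Qs (n+1) lam mu \<Longrightarrow> idout (n+1) (Suc m) A \<Longrightarrow> A $$ (m,m) = 1 \<Longrightarrow> A \<in> Hg n lam mu"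
proof (induction "card {r. r < m \<and> A $$ (r,m) \<noteq> 0}" arbitrary: A rule: less_induct)
  case less
  show ?case
  proof (cases "\<exists>r<m. A $$ (r,m) \<noteq> 0")
    case False then show ?thesis using IH less.prems by auto
  next
    case True
    then obtain r where r: "r < m" "A $$ (r,m) \<noteq> 0" by blast
    have cA: "A \<in> carrier_mat (n+1) (n+1)" using less.prems Qs_carrier by blast
    have pr: "pat lam mu r m" using less.prems r m by (intro Qs_pat[of A "n+1"]) auto
    define A' where "A' = Tm (n+1) r m * A"
    have e: "A' $$ (a,b) = A $$ (a,b) + (if a = r then A $$ (m,b) else 0)" if "a < n+1" "b < n+1" for a b
      unfolding A'_def using Tm_mult_left[OF cA, of r m a b] that r m by simp
    have TQ: "Tm (n+1) r m \<in> Qs (n+1) lam mu" using r m pr by (intro Tm_Qs) auto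
    have A'Q: "A' \<in> Qs (n+1) lam mu" unfolding A'_def using TQ less.prems by (intro Qs_mult)
    have A'id: "idout (n+1) (Suc m) A'"
      unfolding idout_def
    proof (intro allI impI)
      fix a b assume ab: "a < n+1" "b < n+1" "Suc m \<le> a \<or> Suc m \<le> b"
      show "A' $$ (a,b) = (if a = b then 1 else 0)"
      proof (cases "a = r")
        case True
        then have "Suc m \<le> b" using ab r by auto
        then have "A $$ (r,b) = 0" "A $$ (m,b) = 0"
          using less.prems(2) ab r unfolding idout_def by auto
        then show ?thesis using e[OF ab(1,2)] True ab r \<open>Suc m \<le> b\<close> by auto
      next
        case False
        then show ?thesis using e[OF ab(1,2)] less.prems(2) ab unfolding idout_def by auto
      qed
    qed
    have A'mm: "A' $$ (m,m) = 1" using e[of m m] m r less.prems by auto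
    have sub: "{r'. r' < m \<and> A' $$ (r',m) \<noteq> 0} \<subset> {r'. r' < m \<and> A $$ (r',m) \<noteq> 0}"
    proof
      show "{r'. r' < m \<and> A' $$ (r',m) \<noteq> 0} \<subseteq> {r'. r' < m \<and> A $$ (r',m) \<noteq> 0}"
      proof (safe)
        fix r' assume h: "r' < m" "A' $$ (r',m) \<noteq> 0" "A $$ (r',m) = 0"
        show False
        proof (cases "r' = r")
          case True then show False using r h by simp
        next
          case False then show False using e[of r' m] h m by simp
        qed
      qed
      have "A' $$ (r,m) = A $$ (r,m) + (if r = r then A $$ (m,m) else 0)" by (rule e) (use r m in auto)
      also have "\<dots> = 1 + 1" using r(2) less.prems(3) by (simp only: bit_not_zero_iff if_True simp_thms)
      finally have "A' $$ (r,m) = 1 + 1" .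
      then have "A' $$ (r,m) = 0" by (simp only: bit_add_self)
      then have "r \<notin> {r'. r' < m \<and> A' $$ (r',m) \<noteq> 0}" by simp
      moreover have "r \<in> {r'. r' < m \<and> A $$ (r',m) \<noteq> 0}" using r by simp
      ultimately show "{r'. r' < m \<and> A' $$ (r',m) \<noteq> 0} \<noteq> {r'. r' < m \<and> A $$ (r',m) \<noteq> 0}"
        by metis
    qed
    have "card {r'. r' < m \<and> A' $$ (r',m) \<noteq> 0} < card {r'. r' < m \<and> A $$ (r',m) \<noteq> 0}"
      by (rule psubset_card_mono[OF _ sub]) simp
    from less.hyps[OF this A'Q A'id A'mm] have "A' \<in> Hg n lam mu" .
    moreover have "Tm (n+1) r m \<in> Hg n lam mu" by (rule pat_all) (use r m pr in auto)
    ultimately show ?thesis unfolding A'_def by (intro left_cancel[of r m _ _ _ A]) (use r m cA in auto)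
  qed
qed

lemma row_clear:
  assumes m: "m < n + 1"
    and IH: "\<And>A'. A' \<in> Qs (n+1) lam mu \<Longrightarrow> idout (n+1) m A' \<Longrightarrow> A' \<in> Hg n lam mu"
  shows "A \<in> Qs (n+1) lam mu \<Longrightarrow> idout (n+1) (Suc m) A \<Longrightarrow> A $$ (m,m) = 1 \<Longrightarrow>
           (\<forall>r<m. A $$ (r,m) = 0) \<Longrightarrow> A \<in> Hg n lam mu"
proof (induction "card {c. c < m \<and> A $$ (m,c) \<noteq> 0}" arbitrary: A rule: less_induct)
  case less
  show ?case
  proof (cases "\<exists>c<m. A $$ (m,c) \<noteq> 0")
    case False
    have "idout (n+1) m A"
      unfolding idout_def
    proof (intro allI impI)
      fix a b assume ab: "a < n+1" "b < n+1" "m \<le> a \<or> m \<le> b"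
      show "A $$ (a,b) = (if a = b then 1 else 0)"
      proof (cases "Suc m \<le> a \<or> Suc m \<le> b")
        case True then show ?thesis using less.prems(2) ab unfolding idout_def by blast
      next
        case F2: False
        then have "a = m \<or> b = m" using ab by auto
        then show ?thesis using F2 False less.prems(3,4) by auto
      qed
    qed
    then show ?thesis using IH less.prems by auto
  next
    case True
    then obtain c where c: "c < m" "A $$ (m,c) \<noteq> 0" by blast
    have cA: "A \<in> carrier_mat (n+1) (n+1)" using less.prems Qs_carrier by blast
    have pc: "pat lam mu m c" using less.prems c m by (intro Qs_pat[of A "n+1"]) auto
    define A' where "A' = A * Tm (n+1) m c"
    have e: "A' $$ (a,b) = A $$ (a,b) + (if b = c then A $$ (a,m) else 0)" if "a < n+1" "b < n+1" for a b
      unfolding A'_def using Tm_mult_right[OF cA, of m c a b] that c m by simp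
    have colm: "A $$ (a,m) = (if a = m then 1 else 0)" if "a < n+1" for a
    proof -
      consider "a < m" | "a = m" | "Suc m \<le> a" by linarith
      then show ?thesis using less.prems(2,3,4) that m unfolding idout_def by cases auto
    qed
    have TQ: "Tm (n+1) m c \<in> Qs (n+1) lam mu" using c m pc by (intro Tm_Qs) auto
    have A'Q: "A' \<in> Qs (n+1) lam mu" unfolding A'_def using TQ less.prems by (intro Qs_mult)
    have A'id: "idout (n+1) (Suc m) A'"
      unfolding idout_def
    proof (intro allI impI)
      fix a b assume ab: "a < n+1" "b < n+1" "Suc m \<le> a \<or> Suc m \<le> b"
      show "A' $$ (a,b) = (if a = b then 1 else 0)"
      proof (cases "b = c")
        case True
        then have "Suc m \<le> a" using ab c by auto
        then have "A $$ (a,c) = 0" "A $$ (a,m) = 0"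
          using less.prems(2) ab c m unfolding idout_def by auto
        then show ?thesis using e[OF ab(1,2)] True ab c \<open>Suc m \<le> a\<close> by auto
      next
        case False
        then show ?thesis using e[OF ab(1,2)] less.prems(2) ab unfolding idout_def by auto
      qed
    qed
    have A'mm: "A' $$ (m,m) = 1" using e[of m m] m c less.prems by auto
    have A'col: "\<forall>r<m. A' $$ (r,m) = 0" using e m c less.prems(4) by auto
    have sub: "{c'. c' < m \<and> A' $$ (m,c') \<noteq> 0} \<subset> {c'. c' < m \<and> A $$ (m,c') \<noteq> 0}"
    proof
      show "{c'. c' < m \<and> A' $$ (m,c') \<noteq> 0} \<subseteq> {c'. c' < m \<and> A $$ (m,c') \<noteq> 0}"
      proof (safe)
        fix c' assume h: "c' < m" "A' $$ (m,c') \<noteq> 0" "A $$ (m,c') = 0"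
        show False
        proof (cases "c' = c")
          case True then show False using c h by simp
        next
          case False then show False using e[of m c'] h m by simp
        qed
      qed
      have "A' $$ (m,c) = A $$ (m,c) + (if c = c then A $$ (m,m) else 0)" by (rule e) (use c m in auto)
      also have "\<dots> = 1 + 1" using c(2) less.prems(3) by (simp only: bit_not_zero_iff if_True simp_thms)
      finally have "A' $$ (m,c) = 1 + 1" .
      then have "A' $$ (m,c) = 0" by (simp only: bit_add_self)
      then have "c \<notin> {c'. c' < m \<and> A' $$ (m,c') \<noteq> 0}" by simp
      moreover have "c \<in> {c'. c' < m \<and> A $$ (m,c') \<noteq> 0}" using c by simp
      ultimately show "{c'. c' < m \<and> A' $$ (m,c') \<noteq> 0} \<noteq> {c'. c' < m \<and> A $$ (m,c') \<noteq> 0}"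
        by metis
    qed
    have "card {c'. c' < m \<and> A' $$ (m,c') \<noteq> 0} < card {c'. c' < m \<and> A $$ (m,c') \<noteq> 0}"
      by (rule psubset_card_mono[OF _ sub]) simp
    from less.hyps[OF this A'Q A'id A'mm A'col] have "A' \<in> Hg n lam mu" .
    moreover have "Tm (n+1) m c \<in> Hg n lam mu" by (rule pat_all) (use c m pc in auto)
    ultimately show ?thesis unfolding A'_def by (intro right_cancel[of m c _ _ _ A]) (use c m cA in auto)
  qed
qed


lemma pivot1:
  assumes m: "m < n + 1"
    and IH: "\<And>A'. A' \<in> Qs (n+1) lam mu \<Longrightarrow> idout (n+1) m A' \<Longrightarrow> A' \<in> Hg n lam mu"
  shows "A \<in> Qs (n+1) lam mu \<Longrightarrow> idout (n+1) (Suc m) A \<Longrightarrow> A $$ (m,m) = 1 \<Longrightarrow> A \<in> Hg n lam mu"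
  by (rule col_clear[OF m row_clear[OF m IH]])

lemma step:
  assumes m: "m < n + 1"
    and IH: "\<And>A'. A' \<in> Qs (n+1) lam mu \<Longrightarrow> idout (n+1) m A' \<Longrightarrow> A' \<in> Hg n lam mu"
    and AQ: "A \<in> Qs (n+1) lam mu" and Aid: "idout (n+1) (Suc m) A"
  shows "A \<in> Hg n lam mu"
proof (cases "A $$ (m,m) = 1")
  case True then show ?thesis using pivot1[OF m IH AQ Aid] by blast
next
  case False
  then have Amm: "A $$ (m,m) = 0" by simp
  have cA: "A \<in> carrier_mat (n+1) (n+1)" using AQ Qs_carrier by blast
  have iA: "invertible_mat A" using AQ by (simp add: Qs_def)
  obtain r where r0: "r < n+1" "A $$ (r,m) \<noteq> 0" using col_nonzero[OF cA iA m] by blast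
  obtain c where c0: "c < n+1" "A $$ (m,c) \<noteq> 0" using row_nonzero[OF cA iA m] by blast
  have "r < m"
  proof (rule ccontr)
    assume "\<not> r < m"
    have "r \<noteq> m" using r0 Amm by auto
    moreover from this have "Suc m \<le> r" using \<open>\<not> r < m\<close> by simp
    ultimately show False using Aid r0 m unfolding idout_def by auto
  qed
  have "c < m"
  proof (rule ccontr)
    assume "\<not> c < m"
    have "c \<noteq> m" using c0 Amm by auto
    moreover from this have "Suc m \<le> c" using \<open>\<not> c < m\<close> by simp
    ultimately show False using Aid c0 m unfolding idout_def by auto
  qed
  have pr: "pat lam mu r m" using AQ r0 m by (intro Qs_pat[of A "n+1"]) auto
  have pc: "pat lam mu m c" using AQ c0 m by (intro Qs_pat[of A "n+1"]) auto
  show ?thesis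
  proof (cases "c \<le> r")
    case True
    have "block_of lam (c+1) \<le> block_of lam (r+1)" using True by (intro block_of_mono) simp
    moreover have "block_of mu (r+1) \<le> block_of mu (m+1)" using \<open>r < m\<close> by (intro block_of_mono) simp
    ultimately have pmr: "pat lam mu m r" using pc unfolding pat_def by linarith
    define A' where "A' = Tm (n+1) m r * A"
    have e: "A' $$ (a,b) = A $$ (a,b) + (if a = m then A $$ (r,b) else 0)" if "a < n+1" "b < n+1" for a b
      unfolding A'_def using Tm_mult_left[OF cA, of m r a b] that \<open>r < m\<close> m by simp
    have TQ: "Tm (n+1) m r \<in> Qs (n+1) lam mu" using \<open>r < m\<close> m pmr by (intro Tm_Qs) auto
    have A'Q: "A' \<in> Qs (n+1) lam mu" unfolding A'_def using TQ AQ by (intro Qs_mult)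
    have A'id: "idout (n+1) (Suc m) A'"
      unfolding idout_def
    proof (intro allI impI)
      fix a b assume ab: "a < n+1" "b < n+1" "Suc m \<le> a \<or> Suc m \<le> b"
      show "A' $$ (a,b) = (if a = b then 1 else 0)"
      proof (cases "a = m")
        case True
        then have "Suc m \<le> b" using ab by auto
        then have "A $$ (m,b) = 0" "A $$ (r,b) = 0"
          using Aid ab \<open>r < m\<close> m unfolding idout_def by auto
        then show ?thesis using e[OF ab(1,2)] True ab \<open>Suc m \<le> b\<close> by auto
      next
        case False
        then show ?thesis using e[OF ab(1,2)] Aid ab unfolding idout_def by auto
      qed
    qed
    have "A' $$ (m,m) = A $$ (m,m) + (if m = m then A $$ (r,m) else 0)" by (rule e) (use m in auto)
    also have "\<dots> = 1" using Amm r0(2) by simp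
    finally have A'mm: "A' $$ (m,m) = 1" .
    have "A' \<in> Hg n lam mu" using pivot1[OF m IH A'Q A'id A'mm] .
    moreover have "Tm (n+1) m r \<in> Hg n lam mu" by (rule pat_all) (use \<open>r < m\<close> m pmr in auto)
    ultimately show ?thesis unfolding A'_def
      by (intro left_cancel[of m r _ _ _ A]) (use \<open>r < m\<close> m cA in auto)
  next
    case False
    have "block_of mu (r+1) \<le> block_of mu (c+1)" using False by (intro block_of_mono) simp
    moreover have "block_of lam (c+1) \<le> block_of lam (m+1)" using \<open>c < m\<close> by (intro block_of_mono) simp
    ultimately have pcm: "pat lam mu c m" using pr unfolding pat_def by linarith
    define A' where "A' = A * Tm (n+1) c m"
    have e: "A' $$ (a,b) = A $$ (a,b) + (if b = m then A $$ (a,c) else 0)" if "a < n+1" "b < n+1" for a b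
      unfolding A'_def using Tm_mult_right[OF cA, of c m a b] that \<open>c < m\<close> m by simp
    have TQ: "Tm (n+1) c m \<in> Qs (n+1) lam mu" using \<open>c < m\<close> m pcm by (intro Tm_Qs) auto
    have A'Q: "A' \<in> Qs (n+1) lam mu" unfolding A'_def using TQ AQ by (intro Qs_mult)
    have A'id: "idout (n+1) (Suc m) A'"
      unfolding idout_def
    proof (intro allI impI)
      fix a b assume ab: "a < n+1" "b < n+1" "Suc m \<le> a \<or> Suc m \<le> b"
      show "A' $$ (a,b) = (if a = b then 1 else 0)"
      proof (cases "b = m")
        case True
        then have "Suc m \<le> a" using ab by auto
        then have "A $$ (a,m) = 0" "A $$ (a,c) = 0"
          using Aid ab \<open>c < m\<close> m unfolding idout_def by auto
        then show ?thesis using e[OF ab(1,2)] True ab \<open>Suc m \<le> a\<close> by auto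
      next
        case False
        then show ?thesis using e[OF ab(1,2)] Aid ab unfolding idout_def by auto
      qed
    qed
    have "A' $$ (m,m) = A $$ (m,m) + (if m = m then A $$ (m,c) else 0)" by (rule e) (use m in auto)
    also have "\<dots> = 1" using Amm c0(2) by simp
    finally have A'mm: "A' $$ (m,m) = 1" .
    have "A' \<in> Hg n lam mu" using pivot1[OF m IH A'Q A'id A'mm] .
    moreover have "Tm (n+1) c m \<in> Hg n lam mu" by (rule pat_all) (use \<open>c < m\<close> m pcm in auto)
    ultimately show ?thesis unfolding A'_def
      by (intro right_cancel[of c m _ _ _ A]) (use \<open>c < m\<close> m cA in auto)
  qed
qed

lemma main_elim: "k \<le> n + 1 \<Longrightarrow> A \<in> Qs (n+1) lam mu \<Longrightarrow> idout (n+1) k A \<Longrightarrow> A \<in> Hg n lam mu"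
proof (induction k arbitrary: A)
  case 0
  have "A = 1\<^sub>m (n+1)"
  proof (rule eq_matI)
    fix i j assume "i < dim_row (1\<^sub>m (n+1))" "j < dim_col (1\<^sub>m (n+1))"
    then show "A $$ (i,j) = 1\<^sub>m (n+1) $$ (i,j)" using "0.prems"(3) unfolding idout_def by simp
  next
    show "dim_row A = dim_row (1\<^sub>m (n+1))" "dim_col A = dim_col (1\<^sub>m (n+1))"
      using "0.prems"(2) Qs_carrier by fastforce+
  qed
  then show ?case using Hg_one by simp
next
  case (Suc m)
  show ?case
    by (rule step[of m n lam mu A]) (use Suc in auto)
qed

lemma Qs_sub_Hg: "Qs (n+1) lam mu \<subseteq> Hg n lam mu"
proof
  fix A assume "A \<in> Qs (n+1) lam mu"
  moreover have "idout (n+1) (n+1) A" by (simp add: idout_def)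
  ultimately show "A \<in> Hg n lam mu" by (intro main_elim[of "n+1"]) auto
qed

lemma GL_monoid: "monoid (GL_group N)"
proof (rule monoidI)
  fix x y assume "x \<in> carrier (GL_group N)" "y \<in> carrier (GL_group N)"
  then show "x \<otimes>\<^bsub>GL_group N\<^esub> y \<in> carrier (GL_group N)"
    by (auto simp: GL_group_def GL_def intro: invertible_mult)
next
  show "\<one>\<^bsub>GL_group N\<^esub> \<in> carrier (GL_group N)"
    by (simp add: GL_group_def GL_def one_invertible)
next
  fix x y z assume "x \<in> carrier (GL_group N)" "y \<in> carrier (GL_group N)" "z \<in> carrier (GL_group N)"
  then show "x \<otimes>\<^bsub>GL_group N\<^esub> y \<otimes>\<^bsub>GL_group N\<^esub> z = x \<otimes>\<^bsub>GL_group N\<^esub> (y \<otimes>\<^bsub>GL_group N\<^esub> z)"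
    by (auto simp: GL_group_def GL_def)
next
  fix x assume "x \<in> carrier (GL_group N)"
  then show "\<one>\<^bsub>GL_group N\<^esub> \<otimes>\<^bsub>GL_group N\<^esub> x = x"
    by (auto simp: GL_group_def GL_def)
next
  fix x assume "x \<in> carrier (GL_group N)"
  then show "x \<otimes>\<^bsub>GL_group N\<^esub> \<one>\<^bsub>GL_group N\<^esub> = x"
    by (auto simp: GL_group_def GL_def)
qed

lemma gen_facts:
  assumes "z \<in> S_gens n lam mu"
  shows "phi n z \<in> Qs (n+1) lam mu \<and> phi n z * phi n z = 1\<^sub>m (n+1)"
proof -
  from assms consider (x) k where "z = X k" "1 \<le> k" "k \<le> n" "k \<notin> stopover lam"
    | (y) k where "z = Y k" "1 \<le> k" "k \<le> n" "k \<notin> stopover mu"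
    unfolding S_gens_def by blast
  then show ?thesis
  proof cases
    case x
    define i where "i = k - 1"
    have k: "k = i + 1" using x(2) by (simp add: i_def)
    have ph: "phi n z = Tm (n+1) (i+1) i" using x k phi_X[of n i] by simp
    have "block_of lam (Suc (i+1)) = block_of lam (i+1)" using x k by (simp add: block_of_eq_Suc)
    moreover have "block_of mu (i+1) \<le> block_of mu (i+2)" by (intro block_of_mono) simp
    ultimately have p: "pat lam mu (i+1) i" unfolding pat_def by simp
    have "Tm (n+1) (i+1) i \<in> Qs (n+1) lam mu" by (rule Tm_Qs) (use x k p in auto)
    moreover have "Tm (n+1) (i+1) i * Tm (n+1) (i+1) i = 1\<^sub>m (n+1)" by (rule Tm_sq) (use x k in auto)
    ultimately show ?thesis using ph by simp
  next
    case y
    define i where "i = k - 1"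
    have k: "k = i + 1" using y(2) by (simp add: i_def)
    have ph: "phi n z = Tm (n+1) i (i+1)" using y k phi_Y[of n i] by simp
    have "block_of mu (Suc (i+1)) = block_of mu (i+1)" using y k by (simp add: block_of_eq_Suc)
    moreover have "block_of lam (i+1) \<le> block_of lam (i+2)" by (intro block_of_mono) simp
    ultimately have p: "pat lam mu i (i+1)" unfolding pat_def by simp
    have "Tm (n+1) i (i+1) \<in> Qs (n+1) lam mu" by (rule Tm_Qs) (use y k p in auto)
    moreover have "Tm (n+1) i (i+1) * Tm (n+1) i (i+1) = 1\<^sub>m (n+1)" by (rule Tm_sq) (use y k in auto)
    ultimately show ?thesis using ph by simp
  qed
qed

lemma Hg_sub_Qs: "Hg n lam mu \<subseteq> Qs (n+1) lam mu"
proof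
  fix A assume "A \<in> Hg n lam mu"
  then show "A \<in> Qs (n+1) lam mu"
    unfolding Hg_def
  proof (induction rule: generate.induct)
    case one then show ?case by (simp add: GL_group_def one_Qs)
  next
    case (incl h)
    then show ?case using gen_facts by blast
  next
    case (inv h)
    then obtain z where z: "z \<in> S_gens n lam mu" "h = phi n z" by blast
    have f: "h \<in> Qs (n+1) lam mu" "h * h = 1\<^sub>m (n+1)" using gen_facts[OF z(1)] z(2) by auto
    have c: "h \<in> carrier (GL_group (n+1))" using f(1) by (simp add: GL_group_def GL_def Qs_def)
    have "h = inv\<^bsub>GL_group (n+1)\<^esub> h"
      using monoid.inv_unique'[OF GL_monoid c c] f(2) by (simp add: GL_group_def)
    then show ?case using f(1) by simp
  next
    case (eng h1 h2)
    then show ?case by (simp add: GL_group_def Qs_mult)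
  qed
qed

theorem proposition3:
  fixes n :: nat and lam mu :: "nat list"
  assumes "decomposition (n + 1) lam" and "decomposition (n + 1) mu"
  shows "generate (GL_group (n + 1)) (phi n ` S_gens n lam mu) = P_bar (n + 1) lam mu"
  using Qs_sub_Hg[of n lam mu] Hg_sub_Qs[of n lam mu] unfolding P_bar_Qs Hg_def by blast

end
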